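(* Let $f_0:\mathbb{R}^n\to\mathbb{R}$ be locally Lipschitz continuous, let $X\subset\mathbb{R}^n$ be nonempty and compact, and for $k=1,\dots,s$ and $i=1,\dots,r_k$ let $f_{ik}:\mathbb{R}^{m_k}\times\mathbb{R}^n\to\mathbb{R}$ be continuously differentiable. Let $m=\sum_{k=1}^s m_k$, let $\bar u=(\bar u^1,\dots,\bar u^s)\in\mathbb{R}^m$ with $\bar u^k\in\mathbb{R}^{m_k}$, and for each $k$ let $\|\cdot\|_{(k)}$ be a norm on $\mathbb{R}^{m_k}$. For $\delta\in\mathbb{R}$ define \[ U(\bar u,\delta)=\Big\{(v^1,\dots,v^s)\in\mathbb{R}^m ~\Big|~ \max_{k=1,\dots,s}\|v^k-\bar u^k\|_{(k)}\le|\delta|\Big\} \] and \[ q(\delta)=\min_{x\in X}\ \max_{v\in U(\bar u,\delta)}\ f_0(x)+\sum_{k=1}^s\max_{i=1,\dots,r_k} f_{ik}(v^k,x). \] Let $M$ be the set of minimizers of $\min_{x\in X} f_0(x)+\sum_{k=1}^s\max_{i=1,\dots,r_k} f_{ik}(\bar u^k,x)$, and for $x\in\mathbb{R}^n$ let $I_k(x)=\{i \mid f_{ik}(\bar u^k,x)=\max_{j=1,\dots,r_k} f_{jk}(\bar u^k,x)\}$. Then $q$ is locally Lipschitz continuous at $0$ with local Lipschitz modulus \[ \operatorname{lip} q(0)\le\max_{\bar x\in M}\sum_{k=1}^s\sum_{i\in I_k(\bar x)}\ \max_{\|w_i^k\|_{(k)}\le 1}\big|\langle\nabla_1 f_{ik}(\bar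 u^k,\bar x),w_i^k\rangle\big|, \] where the right-hand side simplifies to $\max_{\bar x\in M}\sum_{k=1}^s\sum_{i\in I_k(\bar x)}\|\nabla_1 f_{ik}(\bar u^k,\bar x)\|_2$ when $\|\cdot\|_{(k)}=\|\cdot\|_2$ for all $k$.
   Context: $\nabla_1 f_{ik}(u^k,x)$ denotes the gradient of $f_{ik}(\cdot,x)$ at $u^k$ for fixed $x$. A function $f:\mathbb{R}^N\to[-\infty,\infty]$ is locally Lipschitz continuous at $\bar z$ if it is real-valued on a neighborhood of $\bar z$ and there exist $\kappa\in[0,\infty)$ and $\epsilon>0$ with $|f(z)-f(z')|\le\kappa\|z-z'\|_2$ whenever $\|z-\bar z\|_2\le\epsilon$, $\|z'-\bar z\|_2\le\epsilon$; it is locally Lipschitz continuous if this holds at every point. The local Lipschitz modulus is $\operatorname{lip} f(\bar z)=\limsup_{z,z'\to\bar z,\ z\ne z'}|f(z)-f(z')|/\|z-z'\|_2$. *)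

theory Defs
  imports "HOL-Analysis.Analysis" "HOL-Library.Liminf_Limsup"
begin

text \<open>Local Lipschitz continuity at a point (as in the paper; functions are real-valued
  everywhere here, so the "real-valued near zbar" clause is automatic).\<close>
definition loc_lipschitz_at :: "('a::metric_space \<Rightarrow> real) \<Rightarrow> 'a \<Rightarrow> bool" where
  "loc_lipschitz_at f zb \<longleftrightarrow>
     (\<exists>\<kappa>\<ge>0. \<exists>\<epsilon>>0. \<forall>z z'. dist z zb \<le> \<epsilon> \<longrightarrow> dist z' zb \<le> \<epsilon> \<longrightarrow>
        \<bar>f z - f z'\<bar> \<le> \<kappa> * dist z z')"

definition loc_lipschitz :: "('a::metric_space \<Rightarrow> real) \<Rightarrow> bool" where
  "loc_lipschitz f \<longleftrightarrow> (\<forall>z. loc_lipschitz_at f z)"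

definition lip_mod :: "('a::metric_space \<Rightarrow> real) \<Rightarrow> 'a \<Rightarrow> ereal" where
  "lip_mod f zb = Limsup (at (zb, zb) within {p. fst p \<noteq> snd p})
       (\<lambda>p. ereal (\<bar>f (fst p) - f (snd p)\<bar> / dist (fst p) (snd p)))"

definition C1 :: "('a::real_normed_vector \<Rightarrow> 'b::real_normed_vector) \<Rightarrow> bool" where
  "C1 g \<longleftrightarrow> (\<exists>g'. (\<forall>p. (g has_derivative blinfun_apply (g' p)) (at p)) \<and> continuous_on UNIV g')"

text \<open>Block structure: R^m = real^'m, whose coordinates are partitioned into blocks by
  blk :: 'm \<Rightarrow> nat (block k consists of the coordinates j with blk j = k).
  The block space R^{m_k} is identified with the coordinate subspace of real^'m
  supported on block k, and v^k with the projection of v onto that subspace.\<close>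
definition blockspace :: "('m \<Rightarrow> nat) \<Rightarrow> nat \<Rightarrow> (real^'m) set" where
  "blockspace blk k = {v. \<forall>j. blk j \<noteq> k \<longrightarrow> v $ j = 0}"

definition blockproj :: "('m \<Rightarrow> nat) \<Rightarrow> nat \<Rightarrow> real^'m \<Rightarrow> real^'m" where
  "blockproj blk k v = (\<chi> j. if blk j = k then v $ j else 0)"

definition is_norm_on :: "'a::real_vector set \<Rightarrow> ('a \<Rightarrow> real) \<Rightarrow> bool" where
  "is_norm_on V N \<longleftrightarrow>
     (\<forall>v\<in>V. N v \<ge> 0 \<and> (N v = 0 \<longleftrightarrow> v = 0)) \<and>
     (\<forall>v\<in>V. \<forall>c. N (c *\<^sub>R v) = \<bar>c\<bar> * N v) \<and>
     (\<forall>v\<in>V. \<forall>w\<in>V. N (v + w) \<le> N v + N w)"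

definition grad :: "(real^'m \<Rightarrow> real) \<Rightarrow> real^'m \<Rightarrow> real^'m" where
  "grad g u = (\<chi> j. frechet_derivative g (at u) (axis j 1))"

end

theory Submission
  imports Defs
begin


lemma Max_cont:
  fixes g :: "'i \<Rightarrow> 'a::topological_space \<Rightarrow> real"
  assumes "finite A" "A \<noteq> {}" "\<And>i. i \<in> A \<Longrightarrow> continuous_on S (g i)"
  shows "continuous_on S (\<lambda>x. Max ((\<lambda>i. g i x) ` A))"
  using assms
proof (induction A rule: finite_ne_induct)
  case (singleton a) then show ?case by simp
next
  case (insert a A)
  have "continuous_on S (\<lambda>x. max (g a x) (Max ((\<lambda>i. g i x) ` A)))"
    using insert by (intro continuous_on_max) auto
  moreover have "\<And>x. Max ((\<lambda>i. g i x) ` insert a A) = max (g a x) (Max ((\<lambda>i. g i x) ` A))"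
    using insert by (simp add: Max_insert)
  ultimately show ?case by simp
qed

lemma Max_diff:
  fixes a b :: "'i \<Rightarrow> real"
  assumes "finite A" "A \<noteq> {}"
  shows "\<bar>Max (a ` A) - Max (b ` A)\<bar> \<le> (\<Sum>i\<in>A. \<bar>a i - b i\<bar>)"
proof -
  have one: "Max (c ` A) - Max (d ` A) \<le> (\<Sum>i\<in>A. \<bar>c i - d i\<bar>)" for c d :: "'i \<Rightarrow> real"
  proof -
    have "Max (c ` A) \<in> c ` A" using assms by (intro Max_in) auto
    then obtain i where i: "i \<in> A" "Max (c ` A) = c i" by auto
    have "d i \<le> Max (d ` A)" using i assms by simp
    moreover have "\<bar>c i - d i\<bar> \<le> (\<Sum>i\<in>A. \<bar>c i - d i\<bar>)"
      using i assms by (intro member_le_sum) auto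
    ultimately show ?thesis using i by linarith
  qed
  have "Max (b ` A) - Max (a ` A) \<le> (\<Sum>i\<in>A. \<bar>a i - b i\<bar>)"
    using one[of b a] by (simp add: abs_minus_commute)
  then show ?thesis using one[of a b] by linarith
qed

lemma Max_restrict:
  fixes g :: "'i \<Rightarrow> real"
  assumes "finite A" "J \<subseteq> A" "J \<noteq> {}" "\<And>i. i \<in> A - J \<Longrightarrow> \<exists>j\<in>J. g i < g j"
  shows "Max (g ` A) = Max (g ` J)"
proof -
  have fJ: "finite J" using assms finite_subset by blast
  have "Max (g ` A) \<in> g ` A" using assms by (intro Max_in) auto
  then obtain i where i: "i \<in> A" "Max (g ` A) = g i" by auto
  have "Max (g ` J) \<le> Max (g ` A)" using assms fJ by (intro Max_mono) auto
  moreover have "g i \<le> Max (g ` J)"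
  proof (cases "i \<in> J")
    case True then show ?thesis using fJ by simp
  next
    case False
    then obtain j where "j \<in> J" "g i < g j" using assms i by blast
    then show ?thesis using fJ by (meson Max_ge finite_imageI image_eqI less_le_trans order.strict_implies_order)
  qed
  ultimately show ?thesis using i by linarith
qed

lemma ev_prod:
  fixes a :: "'a::metric_space" and b :: "'b::metric_space"
  assumes "eventually P (nhds (a,b))"
  shows "\<exists>d>0. \<forall>x y. dist x a < d \<longrightarrow> dist y b < d \<longrightarrow> P (x,y)"
proof -
  obtain d where d: "d > 0" "\<And>p. dist p (a,b) < d \<Longrightarrow> P p"
    using assms unfolding eventually_nhds_metric by blast
  have "P (x,y)" if "dist x a < d/2" "dist y b < d/2" for x y
  proof -
    have "dist (x,y) (a,b) \<le> \<bar>dist x a\<bar> + \<bar>dist y b\<bar>"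
      unfolding dist_Pair_Pair by (rule sqrt_sum_squares_le_sum_abs)
    also have "\<dots> < d" using that by simp
    finally show ?thesis using d by blast
  qed
  then show ?thesis using d by (intro exI[of _ "d/2"]) auto
qed

lemma finite_pos_choice:
  assumes "finite A" "\<forall>a\<in>A. \<exists>c>0. Q a (c::real)"
    "\<And>a c c'. Q a c \<Longrightarrow> 0 < c' \<Longrightarrow> c' \<le> c \<Longrightarrow> Q a c'"
  shows "\<exists>c>0. \<forall>a\<in>A. Q a c"
  using assms(1,2)
proof (induction A rule: finite_induct)
  case empty then show ?case by (intro exI[of _ 1]) auto
next
  case (insert x F)
  then obtain c where c: "c > 0" "\<forall>a\<in>F. Q a c" by auto
  obtain c1 where c1: "c1 > 0" "Q x c1" using insert by auto
  show ?case using c c1 assms(3)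
    by (intro exI[of _ "min c c1"]) auto
qed

lemma finite_bound_choice:
  assumes "finite A" "\<forall>a\<in>A. \<exists>c. Q a (c::real)"
    "\<And>a c c'. Q a c \<Longrightarrow> c \<le> c' \<Longrightarrow> Q a c'"
  shows "\<exists>c. \<forall>a\<in>A. Q a c"
  using assms(1,2)
proof (induction A rule: finite_induct)
  case empty then show ?case by auto
next
  case (insert x F)
  then obtain c where c: "\<forall>a\<in>F. Q a c" by auto
  obtain c1 where c1: "Q x c1" using insert by auto
  have "\<forall>a\<in>insert x F. Q a (max c c1)"
  proof
    fix a assume "a \<in> insert x F"
    then show "Q a (max c c1)"
    proof
      assume "a = x" then show ?thesis using c1 assms(3)[of x c1 "max c c1"] by simp
    next
      assume "a \<in> F" then show ?thesis using c assms(3)[of a c "max c c1"] by simp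
    qed
  qed
  then show ?case by blast
qed




lemma bp_in: "blockproj blk k v \<in> blockspace blk k"
  by (simp add: blockproj_def blockspace_def)
lemma bp_id: "w \<in> blockspace blk k \<Longrightarrow> blockproj blk k w = w"
  by (auto simp: blockproj_def blockspace_def vec_eq_iff)
lemma bp_add: "blockproj blk k (a + b) = blockproj blk k a + blockproj blk k b"
  by (auto simp: blockproj_def vec_eq_iff)
lemma bp_diff: "blockproj blk k (a - b) = blockproj blk k a - blockproj blk k b"
  by (auto simp: blockproj_def vec_eq_iff)
lemma bp_scale: "blockproj blk k (c *\<^sub>R a) = c *\<^sub>R blockproj blk k a"
  by (auto simp: blockproj_def vec_eq_iff)
lemma bp_zero: "blockproj blk k 0 = 0"
  by (auto simp: blockproj_def vec_eq_iff)
lemma bp_idem: "blockproj blk k (blockproj blk k a) = blockproj blk k a"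
  by (rule bp_id[OF bp_in])
lemma bs_zero: "0 \<in> blockspace blk k" by (simp add: blockspace_def)
lemma bs_add: "a \<in> blockspace blk k \<Longrightarrow> b \<in> blockspace blk k \<Longrightarrow> a + b \<in> blockspace blk k"
  by (simp add: blockspace_def)
lemma bs_diff: "a \<in> blockspace blk k \<Longrightarrow> b \<in> blockspace blk k \<Longrightarrow> a - b \<in> blockspace blk k"
  by (simp add: blockspace_def)
lemma bs_scale: "a \<in> blockspace blk k \<Longrightarrow> c *\<^sub>R a \<in> blockspace blk k"
  by (simp add: blockspace_def)
lemma bs_closed: "closed (blockspace blk k)"
  unfolding blockspace_def
  by (intro closed_Collect_all closed_Collect_imp closed_Collect_eq) (auto intro: continuous_intros)
lemma norm_bp_le: "norm (blockproj blk k v) \<le> norm v"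
  by (rule norm_le_componentwise_cart) (simp add: blockproj_def)
lemma sum_bp:
  assumes "finite K" "\<forall>j. blk j \<in> K"
  shows "(\<Sum>k\<in>K. blockproj blk k v) = v"
  using assms by (simp add: vec_eq_iff blockproj_def sum.delta' [where S=K] if_distrib cong: if_cong)

context
  fixes V :: "'a::real_vector set" and N
  assumes nrm: "is_norm_on V N" and V0: "0 \<in> V"
    and Vadd: "\<And>a b. a \<in> V \<Longrightarrow> b \<in> V \<Longrightarrow> a + b \<in> V"
    and Vscale: "\<And>a c. a \<in> V \<Longrightarrow> c *\<^sub>R a \<in> V"
begin

lemma N_nonneg: "w \<in> V \<Longrightarrow> N w \<ge> 0" using nrm by (simp add: is_norm_on_def)
lemma N_zero: "N 0 = 0" using nrm V0 by (simp add: is_norm_on_def)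
lemma N_eq0: "w \<in> V \<Longrightarrow> N w = 0 \<longleftrightarrow> w = 0" using nrm by (simp add: is_norm_on_def)
lemma N_scale: "w \<in> V \<Longrightarrow> N (c *\<^sub>R w) = \<bar>c\<bar> * N w" using nrm by (simp add: is_norm_on_def)
lemma N_tri: "a \<in> V \<Longrightarrow> b \<in> V \<Longrightarrow> N (a + b) \<le> N a + N b" using nrm by (simp add: is_norm_on_def)
lemma V_minus: "a \<in> V \<Longrightarrow> - a \<in> V" using Vscale[of a "-1"] by simp
lemma V_diff: "a \<in> V \<Longrightarrow> b \<in> V \<Longrightarrow> a - b \<in> V" using Vadd V_minus by (metis diff_conv_add_uminus)
lemma N_minus: "a \<in> V \<Longrightarrow> N (- a) = N a" using N_scale[of a "-1"] by simp
lemma N_commute: "a \<in> V \<Longrightarrow> b \<in> V \<Longrightarrow> N (a - b) = N (b - a)"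
  using N_minus[of "b - a"] V_diff by simp
lemma N_rev_tri: "a \<in> V \<Longrightarrow> b \<in> V \<Longrightarrow> \<bar>N a - N b\<bar> \<le> N (a - b)"
proof -
  assume a: "a \<in> V" and b: "b \<in> V"
  have "N a \<le> N (a - b) + N b" using N_tri[of "a - b" b] V_diff a b by simp
  moreover have "N b \<le> N (b - a) + N a" using N_tri[of "b - a" a] V_diff a b by simp
  moreover have "N (a - b) = N (b - a)" using N_commute a b by blast
  ultimately show ?thesis by linarith
qed
lemma N_sum: "finite J \<Longrightarrow> (\<forall>j\<in>J. u j \<in> V) \<Longrightarrow> N (\<Sum>j\<in>J. u j) \<le> (\<Sum>j\<in>J. N (u j))
    \<and> (\<Sum>j\<in>J. u j) \<in> V"
proof (induction J rule: finite_induct)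
  case empty then show ?case using N_zero V0 by simp
next
  case (insert x F)
  then show ?case using N_tri[of "u x" "sum u F"] Vadd by force
qed

end

lemma N_upper:
  fixes N :: "real^'m \<Rightarrow> real"
  assumes nrm: "is_norm_on (blockspace blk k) N"
  shows "\<exists>C\<ge>0. \<forall>w\<in>blockspace blk k. N w \<le> C * norm w"
proof -
  let ?V = "blockspace blk k"
  let ?J = "{j. blk j = k}"
  note ax = nrm bs_zero bs_add bs_scale
  have axin: "axis j 1 \<in> ?V" if "j \<in> ?J" for j
    using that by (auto simp: blockspace_def axis_def)
  define C where "C = (\<Sum>j\<in>?J. N (axis j 1))"
  have C0: "C \<ge> 0" unfolding C_def using axin N_nonneg[OF ax] by (intro sum_nonneg) auto
  have "N w \<le> C * norm w" if w: "w \<in> ?V" for w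
  proof -
    have we: "w = (\<Sum>j\<in>?J. w $ j *\<^sub>R axis j 1)"
      using w by (auto simp: vec_eq_iff blockspace_def axis_def if_distrib sum.delta' cong: if_cong)
    have "N w \<le> (\<Sum>j\<in>?J. N (w $ j *\<^sub>R axis j 1))"
      using N_sum[OF ax, of ?J "\<lambda>j. w $ j *\<^sub>R axis j 1"] axin bs_scale we by (metis finite)
    also have "\<dots> = (\<Sum>j\<in>?J. \<bar>w $ j\<bar> * N (axis j 1))"
      using N_scale[OF ax] axin by (intro sum.cong) auto
    also have "\<dots> \<le> (\<Sum>j\<in>?J. norm w * N (axis j 1))"
      using axin N_nonneg[OF ax] component_le_norm_cart
      by (intro sum_mono mult_right_mono) auto
    also have "\<dots> = C * norm w" unfolding C_def by (simp add: sum_distrib_left mult.commute)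
    finally show ?thesis .
  qed
  then show ?thesis using C0 by blast
qed

lemma N_lower:
  fixes N :: "real^'m \<Rightarrow> real"
  assumes nrm: "is_norm_on (blockspace blk k) N"
  shows "\<exists>c>0. \<forall>w\<in>blockspace blk k. c * norm w \<le> N w"
proof -
  let ?V = "blockspace blk k"
  note ax = nrm bs_zero bs_add bs_scale
  obtain C where C: "C \<ge> 0" "\<And>w. w \<in> ?V \<Longrightarrow> N w \<le> C * norm w" using N_upper[OF nrm] by blast
  let ?S = "{w\<in>?V. norm w = 1}"
  have cpt: "compact ?S"
  proof -
    have "?S = ?V \<inter> sphere 0 1" by auto
    then show ?thesis using bs_closed[of blk k] compact_sphere[of "0::real^'m" 1]
      by (metis closed_Int_compact)
  qed
  have lip: "C-lipschitz_on ?S N"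
    unfolding lipschitz_on_def
  proof (intro conjI ballI C(1))
    fix x y assume "x \<in> ?S" "y \<in> ?S"
    then have "x \<in> ?V" "y \<in> ?V" by auto
    then show "dist (N x) (N y) \<le> C * dist x y"
      using N_rev_tri[OF ax, of x y] C(2)[of "x - y"] bs_diff[of x blk k y]
      by (simp add: dist_norm dist_real_def)
  qed
  show ?thesis
  proof (cases "?S = {}")
    case True
    have "1 * norm w \<le> N w" if "w \<in> ?V" for w
    proof (cases "w = 0")
      case True then show ?thesis using N_zero[OF ax] by simp
    next
      case False
      then have "(1 / norm w) *\<^sub>R w \<in> ?S" using that bs_scale by auto
      then show ?thesis using True by blast
    qed
    then show ?thesis by (intro exI[of _ 1]) auto
  next
    case False
    obtain m where m: "m \<in> ?S" "\<And>y. y \<in> ?S \<Longrightarrow> N m \<le> N y"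
      using continuous_attains_inf[OF cpt False lipschitz_on_continuous_on[OF lip]] by blast
    have mpos: "N m > 0" using m(1) N_nonneg[OF ax] N_eq0[OF ax] by force
    have "N m * norm w \<le> N w" if "w \<in> ?V" for w
    proof (cases "w = 0")
      case True then show ?thesis using N_zero[OF ax] by simp
    next
      case False
      then have "(1 / norm w) *\<^sub>R w \<in> ?S" using that bs_scale by auto
      then have "N m \<le> N ((1 / norm w) *\<^sub>R w)" using m by blast
      also have "\<dots> = N w / norm w" using N_scale[OF ax that] by simp
      finally show ?thesis using False by (simp add: field_simps)
    qed
    then show ?thesis using mpos by blast
  qed
qed




context
  fixes Fp :: "('a::real_normed_vector \<times> 'b::real_normed_vector) \<Rightarrow> real"
    and D :: "'a \<times> 'b \<Rightarrow> ('a \<times> 'b) \<Rightarrow>\<^sub>L real"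
  assumes der: "\<And>p. (Fp has_derivative blinfun_apply (D p)) (at p)"
begin

lemma pair_der: "((\<lambda>v. (v, x)) has_derivative (\<lambda>h. (h, 0))) (at v0 within S)"
  by (auto intro!: derivative_eq_intros)

lemma fd_has: "((\<lambda>v. Fp (v, x)) has_derivative (\<lambda>w. D (v0, x) (w, 0))) (at v0)"
  using has_derivative_compose[OF pair_der der] by simp

lemma fd_eq: "frechet_derivative (\<lambda>v. Fp (v, x)) (at v0) = (\<lambda>w. D (v0, x) (w, 0))"
  using frechet_derivative_at[OF fd_has] by simp

lemma seg_bound:
  assumes "\<And>t. 0 \<le> t \<Longrightarrow> t \<le> 1 \<Longrightarrow> norm (D (v + t *\<^sub>R h, x) - D0) \<le> \<eta>"
  shows "\<bar>Fp (v + h, x) - Fp (v, x)\<bar> \<le> \<bar>D0 (h, 0)\<bar> + \<eta> * norm h"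
proof -
  define g where "g t = Fp (v + t *\<^sub>R h, x)" for t
  have gd: "(g has_derivative (\<lambda>s. D (v + t *\<^sub>R h, x) (s *\<^sub>R h, 0))) (at t within S)" for t S
  proof -
    have "((\<lambda>t. (v + t *\<^sub>R h, x)) has_derivative (\<lambda>s. (s *\<^sub>R h, 0))) (at t within S)"
      by (auto intro!: derivative_eq_intros)
    from has_derivative_compose[OF this der] show ?thesis unfolding g_def by simp
  qed
  have cont: "continuous_on {0..1} g" by (rule has_derivative_continuous_on[OF gd])
  obtain t where t: "t \<in> {0<..<1}" "norm (g 1 - g 0) \<le> norm (D (v + t *\<^sub>R h, x) ((1 - 0) *\<^sub>R h, 0))"
    using mvt_general[OF _ cont gd] by auto
  let ?Dt = "D (v + t *\<^sub>R h, x)"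
  have "\<bar>?Dt (h,0)\<bar> \<le> \<bar>D0 (h,0)\<bar> + \<bar>(?Dt - D0) (h,0)\<bar>"
    by (simp add: blinfun.diff_left)
  also have "\<bar>(?Dt - D0) (h,0)\<bar> \<le> norm (?Dt - D0) * norm (h, 0::'b)"
    using norm_blinfun[of "?Dt - D0" "(h,0)"] by simp
  also have "\<dots> \<le> \<eta> * norm h"
    using assms[of t] t(1) by (simp add: norm_Pair mult_right_mono)
  finally show ?thesis using t(2) unfolding g_def by simp
qed

end

context
  fixes V :: "'a::real_normed_vector set" and N and L :: "'a \<Rightarrow> real" and c :: real
  assumes nrm: "is_norm_on V N" and V0: "0 \<in> V"
    and Vadd: "\<And>a b. a \<in> V \<Longrightarrow> b \<in> V \<Longrightarrow> a + b \<in> V"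
    and Vscale: "\<And>a c. a \<in> V \<Longrightarrow> c *\<^sub>R a \<in> V"
    and cpos: "c > 0" and clow: "\<And>w. w \<in> V \<Longrightarrow> c * norm w \<le> N w"
    and Llin: "bounded_linear L"
begin

definition "dualv = (SUP w\<in>{w\<in>V. N w \<le> 1}. \<bar>L w\<bar>)"

lemma dual_bdd: "bdd_above ((\<lambda>w. \<bar>L w\<bar>) ` {w\<in>V. N w \<le> 1})"
proof -
  obtain K where K: "\<And>x. norm (L x) \<le> norm x * K" "K > 0"
    using bounded_linear.pos_bounded[OF Llin] by blast
  have "\<bar>L w\<bar> \<le> K / c" if "w \<in> V" "N w \<le> 1" for w
  proof -
    have "norm w \<le> 1 / c" using clow[OF that(1)] that(2) cpos by (simp add: field_simps)
    then have "norm w * K \<le> (1/c) * K" using K(2) by (intro mult_right_mono) auto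
    then show ?thesis using K(1)[of w] by simp
  qed
  then show ?thesis by (auto intro!: bdd_aboveI2)
qed

lemma dual_upper: "w \<in> V \<Longrightarrow> N w \<le> 1 \<Longrightarrow> \<bar>L w\<bar> \<le> dualv"
  unfolding dualv_def using dual_bdd by (intro cSUP_upper) auto

lemma dual_nonneg: "dualv \<ge> 0"
  using dual_upper[of 0] V0 N_zero[OF nrm V0 Vadd Vscale] by simp

lemma dual_bound: "h \<in> V \<Longrightarrow> \<bar>L h\<bar> \<le> dualv * N h"
proof -
  assume h: "h \<in> V"
  note ax = nrm V0 Vadd Vscale
  show ?thesis
  proof (cases "N h = 0")
    case True
    then have "h = 0" using N_eq0[OF ax h] by simp
    then show ?thesis using linear_0[OF bounded_linear.linear[OF Llin]] N_zero[OF ax] by simp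
  next
    case False
    then have Np: "N h > 0" using N_nonneg[OF ax h] by simp
    let ?w = "(1 / N h) *\<^sub>R h"
    have "N ?w = 1" using N_scale[OF ax h] Np by simp
    then have "\<bar>L ?w\<bar> \<le> dualv" using dual_upper Vscale h by simp
    moreover have "L ?w = L h / N h" using linear_scale[OF bounded_linear.linear[OF Llin]] by simp
    ultimately show ?thesis using Np by (simp add: field_simps abs_div)
  qed
qed

end




locale setting =
  fixes f0 :: "real^'n \<Rightarrow> real"
    and X :: "(real^'n) set"
    and s :: nat and r :: "nat \<Rightarrow> nat"
    and blk :: "'m::finite \<Rightarrow> nat"
    and f :: "nat \<Rightarrow> nat \<Rightarrow> real^'m \<Rightarrow> real^'n \<Rightarrow> real"
    and ubar :: "real^'m"
    and N :: "nat \<Rightarrow> real^'m \<Rightarrow> real"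
    and U :: "real \<Rightarrow> (real^'m) set"
    and \<phi> :: "real^'m \<Rightarrow> real^'n \<Rightarrow> real"
    and q :: "real \<Rightarrow> real"
    and M :: "(real^'n) set"
    and I :: "nat \<Rightarrow> real^'n \<Rightarrow> nat set"
    and B :: real
  assumes f0_lip: "loc_lipschitz f0"
    and X_ne: "X \<noteq> {}" and X_cpt: "compact X"
    and blk_range: "\<forall>j. blk j \<in> {1..s}"
    and r_pos: "\<forall>k\<in>{1..s}. r k \<ge> 1"
    and f_C1: "\<forall>k\<in>{1..s}. \<forall>i\<in>{1..r k}.
                 C1 (\<lambda>p::(real^'m) \<times> (real^'n). f i k (blockproj blk k (fst p)) (snd p))"
    and N_norm: "\<forall>k\<in>{1..s}. is_norm_on (blockspace blk k) (N k)"
    and U_def: "\<forall>\<delta>. U \<delta> = {v. Max ((\<lambda>k. N k (blockproj blk k (v - ubar))) ` {1..s}) \<le> \<bar>\<delta>\<bar>}"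
    and \<phi>_def: "\<forall>v x. \<phi> v x = f0 x + (\<Sum>k\<in>{1..s}. Max ((\<lambda>i. f i k (blockproj blk k v) x) ` {1..r k}))"
    and q_def: "\<forall>\<delta>. q \<delta> = (INF x\<in>X. SUP v\<in>U \<delta>. \<phi> v x)"
    and M_def: "M = {x\<in>X. \<forall>y\<in>X. \<phi> ubar x \<le> \<phi> ubar y}"
    and I_def: "\<forall>k x. I k x = {i\<in>{1..r k}. f i k (blockproj blk k ubar) x
                          = Max ((\<lambda>j. f j k (blockproj blk k ubar) x) ` {1..r k})}"
    and B_def: "B = (SUP xb\<in>M. \<Sum>k\<in>{1..s}. \<Sum>i\<in>I k xb.
                   (SUP w\<in>{w\<in>blockspace blk k. N k w \<le> 1}.
                      \<bar>frechet_derivative (\<lambda>v. f i k (blockproj blk k v) xb) (at ubar) w\<bar>))"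
begin

abbreviation "P k \<equiv> blockproj blk k"
abbreviation "BS k \<equiv> blockspace blk k"
definition "Fp i k = (\<lambda>p::(real^'m) \<times> (real^'n). f i k (P k (fst p)) (snd p))"
definition "D i k = (SOME g'. (\<forall>p. (Fp i k has_derivative blinfun_apply (g' p)) (at p)) \<and> continuous_on UNIV g')"

lemma Fp_app: "Fp i k (v, x) = f i k (P k v) x" by (simp add: Fp_def)

lemma D_props:
  assumes "k \<in> {1..s}" "i \<in> {1..r k}"
  shows "\<And>p. (Fp i k has_derivative blinfun_apply (D i k p)) (at p)" "continuous_on UNIV (D i k)"
proof -
  have "\<exists>g'. (\<forall>p. (Fp i k has_derivative blinfun_apply (g' p)) (at p)) \<and> continuous_on UNIV g'"
    using f_C1 assms unfolding C1_def Fp_def by blast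
  from someI_ex[OF this] show "\<And>p. (Fp i k has_derivative blinfun_apply (D i k p)) (at p)"
    "continuous_on UNIV (D i k)" unfolding D_def by auto
qed

lemma Fp_cont: "k \<in> {1..s} \<Longrightarrow> i \<in> {1..r k} \<Longrightarrow> continuous_on UNIV (Fp i k)"
  using D_props(1) by (meson has_derivative_continuous_on has_derivative_at_withinI)

lemma s_pos: "s \<ge> 1"
  using blk_range by (metis atLeastAtMost_iff le_trans)

lemma S_ne: "{1..s} \<noteq> {}" using s_pos by simp

lemma f0_cont: "continuous_on UNIV f0"
proof -
  have "isCont f0 z" for z
  proof -
    obtain \<kappa> \<epsilon> where ke: "\<kappa> \<ge> 0" "\<epsilon> > 0"
      "\<And>a b. dist a z \<le> \<epsilon> \<Longrightarrow> dist b z \<le> \<epsilon> \<Longrightarrow> \<bar>f0 a - f0 b\<bar> \<le> \<kappa> * dist a b"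
      using f0_lip unfolding loc_lipschitz_def loc_lipschitz_at_def by blast
    show ?thesis unfolding continuous_at_eps_delta
    proof (intro allI impI)
      fix e :: real assume e: "e > 0"
      show "\<exists>d>0. \<forall>x'. dist x' z < d \<longrightarrow> dist (f0 x') (f0 z) < e"
      proof (intro exI[of _ "min \<epsilon> (e / (\<kappa> + 1))"] conjI allI impI)
        show "min \<epsilon> (e / (\<kappa> + 1)) > 0" using ke e by simp
        fix x' assume "dist x' z < min \<epsilon> (e / (\<kappa> + 1))"
        then have a: "dist x' z \<le> \<epsilon>" "dist x' z < e / (\<kappa> + 1)" by auto
        have "\<bar>f0 x' - f0 z\<bar> \<le> \<kappa> * dist x' z" using ke(3)[of x' z] a ke by simp
        also have "\<dots> \<le> (\<kappa> + 1) * dist x' z" by (simp add: distrib_right)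
        also have "\<dots> < e" using a(2) ke(1) by (simp add: field_simps)
        finally show "dist (f0 x') (f0 z) < e" by (simp add: dist_real_def)
      qed
    qed
  qed
  then show ?thesis by (simp add: continuous_at_imp_continuous_on)
qed

lemma phi_eq: "\<phi> v x = f0 x + (\<Sum>k\<in>{1..s}. Max ((\<lambda>i. Fp i k (v, x)) ` {1..r k}))"
  using \<phi>_def by (simp add: Fp_app)

lemma phi_cont: "continuous_on UNIV (\<lambda>p. \<phi> (fst p) (snd p))"
proof -
  have "continuous_on UNIV (\<lambda>p::(real^'m) \<times> (real^'n). f0 (snd p) + (\<Sum>k\<in>{1..s}. Max ((\<lambda>i. Fp i k p) ` {1..r k})))"
  proof (intro continuous_intros)
    show "continuous_on UNIV (\<lambda>p::(real^'m) \<times> (real^'n). f0 (snd p))"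
      using f0_cont by (intro continuous_on_compose2[OF f0_cont]) (auto intro: continuous_intros)
    fix k assume k: "k \<in> {1..s}"
    show "continuous_on UNIV (\<lambda>p. Max ((\<lambda>i. Fp i k p) ` {1..r k}))"
      using k r_pos Fp_cont by (intro Max_cont) auto
  qed
  then show ?thesis by (simp add: phi_eq)
qed

lemma phi_cont_x: "continuous_on S (\<phi> v)"
proof -
  have "continuous_on S (\<lambda>x. (\<lambda>p. \<phi> (fst p) (snd p)) (v, x))"
    by (intro continuous_on_compose2[OF phi_cont]) (auto intro: continuous_intros)
  then show ?thesis by simp
qed

lemma M_props: "M \<noteq> {}" "compact M" "M \<subseteq> X"
proof -
  obtain x where "x \<in> X" "\<forall>y\<in>X. \<phi> ubar x \<le> \<phi> ubar y"
    using continuous_attains_inf[OF X_cpt X_ne phi_cont_x] by blast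
  then show "M \<noteq> {}" using M_def by blast
  have "M = X \<inter> (\<Inter>y\<in>X. {x. \<phi> ubar x \<le> \<phi> ubar y})" using M_def by auto
  moreover have "closed (\<Inter>y\<in>X. {x. \<phi> ubar x \<le> \<phi> ubar y})"
    by (intro closed_INT ballI closed_Collect_le phi_cont_x continuous_on_const)
  ultimately show "compact M" using X_cpt by (simp add: compact_Int_closed)
  show "M \<subseteq> X" using M_def by auto
qed

lemma I_Fp: "I k x = {i\<in>{1..r k}. Fp i k (ubar, x) = Max ((\<lambda>j. Fp j k (ubar, x)) ` {1..r k})}"
  using I_def by (simp add: Fp_app)

lemma I_props: assumes "k \<in> {1..s}" shows "I k x \<subseteq> {1..r k}" "I k x \<noteq> {}" "finite (I k x)"
proof -
  show "I k x \<subseteq> {1..r k}" using I_Fp by auto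
  then show "finite (I k x)" using finite_subset by blast
  have "Max ((\<lambda>j. Fp j k (ubar, x)) ` {1..r k}) \<in> (\<lambda>j. Fp j k (ubar, x)) ` {1..r k}"
    using r_pos assms by (intro Max_in) auto
  then show "I k x \<noteq> {}" using I_Fp by auto
qed

end



context setting begin

lemma N_k: "k \<in> {1..s} \<Longrightarrow> is_norm_on (BS k) (N k)"
  using N_norm by auto

definition "cc = (SOME c. c > 0 \<and> (\<forall>k\<in>{1..s}. \<forall>w\<in>BS k. c * norm w \<le> N k w))"

lemma cc_props: "cc > 0" "k \<in> {1..s} \<Longrightarrow> w \<in> BS k \<Longrightarrow> cc * norm w \<le> N k w"
proof -
  have "\<exists>c>0. \<forall>k\<in>{1..s}. \<forall>w\<in>BS k. c * norm w \<le> N k w"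
  proof (rule finite_pos_choice)
    show "\<forall>k\<in>{1..s}. \<exists>c>0. \<forall>w\<in>BS k. c * norm w \<le> N k w" using N_lower N_norm by blast
    fix k c c' assume "\<forall>w\<in>BS k. c * norm w \<le> N k w" "0 < c'" "c' \<le> c"
    then show "\<forall>w\<in>BS k. c' * norm w \<le> N k w"
      by (meson mult_right_mono norm_ge_zero order_trans)
  qed auto
  from someI_ex[OF this[unfolded Ex_def[symmetric]]]
  have "cc > 0 \<and> (\<forall>k\<in>{1..s}. \<forall>w\<in>BS k. cc * norm w \<le> N k w)"
    unfolding cc_def by blast
  then show "cc > 0" "k \<in> {1..s} \<Longrightarrow> w \<in> BS k \<Longrightarrow> cc * norm w \<le> N k w" by auto
qed

lemma bl_pair: "bounded_linear (\<lambda>w. blinfun_apply A (w, 0::'b::real_normed_vector))"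
  by (intro bounded_linear_compose[OF blinfun.bounded_linear_right] bounded_linear_Pair
      bounded_linear_ident bounded_linear_zero)

definition "dual i k x = dualv (BS k) (N k) (\<lambda>w. D i k (ubar, x) (w, 0))"

lemma dual_facts:
  assumes k: "k \<in> {1..s}"
  shows "dual i k x \<ge> 0" "\<And>h. h \<in> BS k \<Longrightarrow> \<bar>D i k (ubar, x) (h, 0)\<bar> \<le> dual i k x * N k h"
    "dual i k x \<le> norm (D i k (ubar, x)) / cc"
    "dual i k x = (SUP w\<in>{w\<in>BS k. N k w \<le> 1}. \<bar>D i k (ubar, x) (w, 0)\<bar>)"
proof -
  note ax = N_k[OF k] bs_zero bs_add bs_scale cc_props(1) cc_props(2)[OF k] bl_pair
  show "dual i k x \<ge> 0" unfolding dual_def by (rule dual_nonneg[OF ax])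
  show "\<And>h. h \<in> BS k \<Longrightarrow> \<bar>D i k (ubar, x) (h, 0)\<bar> \<le> dual i k x * N k h"
    unfolding dual_def by (rule dual_bound[OF ax])
  show deq: "dual i k x = (SUP w\<in>{w\<in>BS k. N k w \<le> 1}. \<bar>D i k (ubar, x) (w, 0)\<bar>)"
    unfolding dual_def by (rule dualv_def[OF ax])
  have "\<bar>D i k (ubar, x) (w, 0)\<bar> \<le> norm (D i k (ubar, x)) / cc" if "w \<in> BS k" "N k w \<le> 1" for w
  proof -
    have "\<bar>D i k (ubar, x) (w, 0)\<bar> \<le> norm (D i k (ubar, x)) * norm (w, 0::real^'n)"
      using norm_blinfun[of "D i k (ubar, x)" "(w,0)"] by simp
    also have "\<dots> = norm (D i k (ubar, x)) * norm w" by (simp add: norm_Pair)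
    also have "\<dots> \<le> norm (D i k (ubar, x)) * (1 / cc)"
    proof (rule mult_left_mono)
      have "cc * norm w \<le> 1" using cc_props(2)[OF k that(1)] that(2) by simp
      then show "norm w \<le> 1 / cc" using cc_props(1) by (simp add: field_simps)
    qed simp
    finally show ?thesis by simp
  qed
  then show "dual i k x \<le> norm (D i k (ubar, x)) / cc"
    unfolding deq using bs_zero[of blk k] N_zero[OF ax(1-4)] by (intro cSUP_least) auto
qed

lemma B_eq: "B = (SUP xb\<in>M. \<Sum>k\<in>{1..s}. \<Sum>i\<in>I k xb. dual i k xb)"
  unfolding B_def
proof (intro SUP_cong refl sum.cong)
  fix xb k i assume k: "k \<in> {1..s}" and i: "i \<in> I k xb"
  then have i': "i \<in> {1..r k}" using I_props by blast
  have "frechet_derivative (\<lambda>v. f i k (P k v) xb) (at ubar) = (\<lambda>w. D i k (ubar, xb) (w, 0))"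
    using fd_eq[OF D_props(1)[OF k i'], of xb ubar] by (simp add: Fp_app)
  then show "(SUP w\<in>{w \<in> BS k. N k w \<le> 1}. \<bar>frechet_derivative (\<lambda>v. f i k (P k v) xb) (at ubar) w\<bar>)
      = dual i k xb" using dual_facts(4)[OF k] by simp
qed

definition "LL k x = (\<Sum>i\<in>I k x. dual i k x)"

lemma B_bdd: "bdd_above ((\<lambda>xb. \<Sum>k\<in>{1..s}. LL k xb) ` M)"
proof -
  define g where "g xb = (\<Sum>k\<in>{1..s}. \<Sum>i\<in>{1..r k}. norm (D i k (ubar, xb)) / cc)" for xb
  have "continuous_on M g" unfolding g_def
  proof (intro continuous_intros)
    fix k i assume "k \<in> {1..s}" "i \<in> {1..r k}"
    then show "continuous_on M (\<lambda>x. D i k (ubar, x))"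
      by (intro continuous_on_compose2[OF D_props(2)]) (auto intro: continuous_intros)
  qed (use cc_props in auto)
  then have "compact (g ` M)" using M_props by (intro compact_continuous_image) auto
  then obtain b where b: "\<And>x. x \<in> g ` M \<Longrightarrow> norm x \<le> b"
    using compact_imp_bounded bounded_iff by metis
  have "(\<Sum>k\<in>{1..s}. LL k xb) \<le> b" if "xb \<in> M" for xb
  proof -
    have "(\<Sum>k\<in>{1..s}. LL k xb) \<le> g xb" unfolding g_def LL_def
    proof (intro sum_mono)
      fix k assume k: "k \<in> {1..s}"
      have "(\<Sum>i\<in>I k xb. dual i k xb) \<le> (\<Sum>i\<in>{1..r k}. dual i k xb)"
        using I_props[OF k] dual_facts(1)[OF k] by (intro sum_mono2) auto
      also have "\<dots> \<le> (\<Sum>i\<in>{1..r k}. norm (D i k (ubar, xb)) / cc)"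
        using dual_facts(3)[OF k] by (intro sum_mono) auto
      finally show "(\<Sum>i\<in>I k xb. dual i k xb) \<le> (\<Sum>i\<in>{1..r k}. norm (D i k (ubar, xb)) / cc)" .
    qed
    also have "\<dots> \<le> b" using b[of "g xb"] that by auto
    finally show ?thesis .
  qed
  then show ?thesis by (auto intro!: bdd_aboveI2)
qed

lemma B_ge: "xb \<in> M \<Longrightarrow> (\<Sum>k\<in>{1..s}. LL k xb) \<le> B"
  unfolding B_eq LL_def[symmetric] using B_bdd by (intro cSUP_upper) auto

lemma LL_nonneg: "k \<in> {1..s} \<Longrightarrow> LL k x \<ge> 0"
  unfolding LL_def using dual_facts(1) by (intro sum_nonneg) auto

lemma B_nonneg: "B \<ge> 0"
proof -
  obtain xb where "xb \<in> M" using M_props by blast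
  then show ?thesis using B_ge[of xb] LL_nonneg by (meson order_trans sum_nonneg)
qed

end



context setting begin

lemma key_local:
  fixes \<epsilon>' :: real
  assumes ep: "\<epsilon>' > 0"
  shows "\<exists>rad>0. \<forall>x v v'. dist x xb < rad \<longrightarrow> dist v ubar < rad \<longrightarrow> dist v' ubar < rad \<longrightarrow>
     (\<forall>k\<in>{1..s}. \<bar>Max ((\<lambda>i. Fp i k (v,x)) ` {1..r k}) - Max ((\<lambda>i. Fp i k (v',x)) ` {1..r k})\<bar>
        \<le> (LL k xb + \<epsilon>' * card (I k xb)) * N k (P k (v - v')))"
proof -
  define jj where "jj k = (SOME j. j \<in> I k xb)" for k
  have jj: "jj k \<in> I k xb" if "k \<in> {1..s}" for k
    unfolding jj_def using I_props(2)[OF that] by (simp add: some_in_eq)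
  have jjR: "jj k \<in> {1..r k}" if "k \<in> {1..s}" for k using jj[OF that] I_props(1)[OF that] by blast
  have gap: "Fp i k (ubar, xb) < Fp (jj k) k (ubar, xb)"
    if k: "k \<in> {1..s}" and i: "i \<in> {1..r k} - I k xb" for k i
  proof -
    have "Fp (jj k) k (ubar, xb) = Max ((\<lambda>j. Fp j k (ubar, xb)) ` {1..r k})"
      using jj[OF k] I_Fp by auto
    moreover have "Fp i k (ubar, xb) \<le> Max ((\<lambda>j. Fp j k (ubar, xb)) ` {1..r k})"
      using i by (intro Max_ge) auto
    moreover have "Fp i k (ubar, xb) \<noteq> Max ((\<lambda>j. Fp j k (ubar, xb)) ` {1..r k})"
      using i I_Fp by auto
    ultimately show ?thesis by linarith
  qed
  have ev1: "eventually (\<lambda>p. \<forall>k\<in>{1..s}. \<forall>i\<in>{1..r k} - I k xb. Fp i k p < Fp (jj k) k p) (nhds (ubar, xb))"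
  proof (intro eventually_ball_finite ballI)
    fix k i assume k: "k \<in> {1..s}" and i: "i \<in> {1..r k} - I k xb"
    have "open {p. Fp i k p < Fp (jj k) k p}"
      using Fp_cont[OF k] jjR[OF k] i by (intro open_Collect_less) auto
    then show "eventually (\<lambda>p. Fp i k p < Fp (jj k) k p) (nhds (ubar, xb))"
      unfolding eventually_nhds using gap[OF k i]
      by (intro exI[of _ "{p. Fp i k p < Fp (jj k) k p}"]) auto
  qed auto
  have ev2: "eventually (\<lambda>p. \<forall>k\<in>{1..s}. \<forall>i\<in>{1..r k}. dist (D i k p) (D i k (ubar, xb)) < cc * \<epsilon>') (nhds (ubar, xb))"
  proof (intro eventually_ball_finite ballI)
    fix k i assume k: "k \<in> {1..s}" and i: "i \<in> {1..r k}"
    have "open {p. dist (D i k p) (D i k (ubar, xb)) < cc * \<epsilon>'}"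
      using D_props(2)[OF k i] by (intro open_Collect_less continuous_intros) auto
    then show "eventually (\<lambda>p. dist (D i k p) (D i k (ubar, xb)) < cc * \<epsilon>') (nhds (ubar, xb))"
      unfolding eventually_nhds using cc_props(1) ep
      by (intro exI[of _ "{p. dist (D i k p) (D i k (ubar, xb)) < cc * \<epsilon>'}"]) auto
  qed auto
  obtain d where d: "d > 0" and dP: "\<And>v x. dist v ubar < d \<Longrightarrow> dist x xb < d \<Longrightarrow>
      (\<forall>k\<in>{1..s}. \<forall>i\<in>{1..r k} - I k xb. Fp i k (v, x) < Fp (jj k) k (v, x)) \<and>
      (\<forall>k\<in>{1..s}. \<forall>i\<in>{1..r k}. dist (D i k (v, x)) (D i k (ubar, xb)) < cc * \<epsilon>')"
    using ev_prod[OF eventually_conj[OF ev1 ev2]] by blast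
  define rad where "rad = d / 3"
  have "\<bar>Max ((\<lambda>i. Fp i k (v,x)) ` {1..r k}) - Max ((\<lambda>i. Fp i k (v',x)) ` {1..r k})\<bar>
        \<le> (LL k xb + \<epsilon>' * card (I k xb)) * N k (P k (v - v'))"
    if x: "dist x xb < rad" and v: "dist v ubar < rad" and v': "dist v' ubar < rad" and k: "k \<in> {1..s}"
    for x v v' k
  proof -
    have restr: "Max ((\<lambda>i. Fp i k (w,x)) ` {1..r k}) = Max ((\<lambda>i. Fp i k (w,x)) ` I k xb)"
      if "dist w ubar < d" for w
    proof (rule Max_restrict)
      have dx: "dist x xb < d" using x d unfolding rad_def by simp
      show "finite {1..r k}" by simp
      show "I k xb \<subseteq> {1..r k}" "I k xb \<noteq> {}" using I_props[OF k] by auto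
      fix i assume "i \<in> {1..r k} - I k xb"
      then show "\<exists>j\<in>I k xb. Fp i k (w, x) < Fp j k (w, x)"
        using dP[OF that dx] k jj[OF k] by blast
    qed
    define h where "h = P k (v - v')"
    have hBS: "h \<in> BS k" unfolding h_def by (rule bp_in)
    have trm: "\<bar>Fp i k (v, x) - Fp i k (v', x)\<bar> \<le> (dual i k xb + \<epsilon>') * N k h"
      if i: "i \<in> I k xb" for i
    proof -
      have iR: "i \<in> {1..r k}" using i I_props[OF k] by blast
      have "P k (v' + h) = P k v" unfolding h_def by (simp add: bp_add bp_idem bp_diff)
      then have e1: "Fp i k (v, x) = Fp i k (v' + h, x)" by (simp add: Fp_app)
      have nh: "norm h \<le> dist v v'" unfolding h_def dist_norm by (rule norm_bp_le)
      have dvv: "dist v v' < 2 * rad" using v v' dist_triangle3[of v v' ubar] by (simp add: dist_commute)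
      have "\<bar>Fp i k (v' + h, x) - Fp i k (v', x)\<bar> \<le> \<bar>D i k (ubar, xb) (h, 0)\<bar> + (cc * \<epsilon>') * norm h"
      proof (rule seg_bound[OF D_props(1)[OF k iR]])
        fix t :: real assume t: "0 \<le> t" "t \<le> 1"
        have "dist (v' + t *\<^sub>R h) ubar \<le> dist v' ubar + norm (t *\<^sub>R h)"
        proof -
          have "v' + t *\<^sub>R h - ubar = (v' - ubar) + t *\<^sub>R h" by simp
          then show ?thesis unfolding dist_norm by (metis norm_triangle_ineq)
        qed
        also have "norm (t *\<^sub>R h) \<le> norm h" using t by (simp add: mult_left_le_one_le)
        finally have "dist (v' + t *\<^sub>R h) ubar < d" using v' nh dvv unfolding rad_def by linarith
        then have "dist (D i k (v' + t *\<^sub>R h, x)) (D i k (ubar, xb)) < cc * \<epsilon>'"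
        proof -
          have "dist x xb < d" using x d unfolding rad_def by simp
          from dP[OF \<open>dist (v' + t *\<^sub>R h) ubar < d\<close> this] k iR show ?thesis by blast
        qed
        then show "norm (D i k (v' + t *\<^sub>R h, x) - D i k (ubar, xb)) \<le> cc * \<epsilon>'"
          by (simp add: dist_norm)
      qed
      also have "\<dots> \<le> dual i k xb * N k h + \<epsilon>' * N k h"
      proof (rule add_mono)
        show "\<bar>D i k (ubar, xb) (h, 0)\<bar> \<le> dual i k xb * N k h" using dual_facts(2)[OF k hBS] .
        have "cc * norm h \<le> N k h" using cc_props(2)[OF k hBS] .
        then show "cc * \<epsilon>' * norm h \<le> \<epsilon>' * N k h" using ep
          by (metis mult.assoc mult.commute mult_left_mono less_imp_le)
      qed
      finally show ?thesis using e1 by (simp add: distrib_right)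
    qed
    have "\<bar>Max ((\<lambda>i. Fp i k (v,x)) ` {1..r k}) - Max ((\<lambda>i. Fp i k (v',x)) ` {1..r k})\<bar>
        = \<bar>Max ((\<lambda>i. Fp i k (v,x)) ` I k xb) - Max ((\<lambda>i. Fp i k (v',x)) ` I k xb)\<bar>"
    proof -
      have "dist v ubar < d" "dist v' ubar < d" using v v' d unfolding rad_def by auto
      then show ?thesis using restr[of v] restr[of v'] by simp
    qed
    also have "\<dots> \<le> (\<Sum>i\<in>I k xb. \<bar>Fp i k (v, x) - Fp i k (v', x)\<bar>)"
      using I_props[OF k] by (intro Max_diff) auto
    also have "\<dots> \<le> (\<Sum>i\<in>I k xb. (dual i k xb + \<epsilon>') * N k h)"
      using trm by (intro sum_mono) auto
    also have "\<dots> = (LL k xb + \<epsilon>' * card (I k xb)) * N k h"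
      unfolding LL_def by (simp add: sum_distrib_right[symmetric] sum.distrib mult.commute[of "\<epsilon>'"])
    finally show ?thesis unfolding h_def .
  qed
  then show ?thesis using d unfolding rad_def by (intro exI[of _ "d/3"]) auto
qed

end



context setting begin

definition "Rsum = (\<Sum>k\<in>{1..s}. real (r k))"

lemma Rsum_nonneg: "Rsum \<ge> 0" unfolding Rsum_def by (simp add: sum_nonneg)

lemma Nk_nonneg: "k \<in> {1..s} \<Longrightarrow> N k (P k w) \<ge> 0"
  using N_nonneg[OF N_k bs_zero bs_add bs_scale bp_in] by blast

lemma phi_lip_near_M:
  fixes \<epsilon>' :: real
  assumes ep: "\<epsilon>' > 0"
  shows "\<exists>e>0. \<forall>xm\<in>M. \<forall>x v v' t. dist x xm < e \<longrightarrow> dist v ubar < e \<longrightarrow> dist v' ubar < e \<longrightarrow>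
      0 \<le> t \<longrightarrow> (\<forall>k\<in>{1..s}. N k (P k (v - v')) \<le> t) \<longrightarrow>
      \<bar>\<phi> v x - \<phi> v' x\<bar> \<le> (B + \<epsilon>' * Rsum) * t"
proof -
  have "\<forall>xb\<in>M. \<exists>rad>0. \<forall>x v v'. dist x xb < rad \<longrightarrow> dist v ubar < rad \<longrightarrow> dist v' ubar < rad \<longrightarrow>
     (\<forall>k\<in>{1..s}. \<bar>Max ((\<lambda>i. Fp i k (v,x)) ` {1..r k}) - Max ((\<lambda>i. Fp i k (v',x)) ` {1..r k})\<bar>
        \<le> (LL k xb + \<epsilon>' * card (I k xb)) * N k (P k (v - v')))"
    using key_local[OF ep] by blast
  then obtain rr where rr: "\<And>xb. xb \<in> M \<Longrightarrow> rr xb > 0"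
    "\<And>xb x v v' k. xb \<in> M \<Longrightarrow> dist x xb < rr xb \<Longrightarrow> dist v ubar < rr xb \<Longrightarrow> dist v' ubar < rr xb \<Longrightarrow>
      k \<in> {1..s} \<Longrightarrow> \<bar>Max ((\<lambda>i. Fp i k (v,x)) ` {1..r k}) - Max ((\<lambda>i. Fp i k (v',x)) ` {1..r k})\<bar>
        \<le> (LL k xb + \<epsilon>' * card (I k xb)) * N k (P k (v - v'))"
    by metis
  obtain e where e: "0 < e" "\<And>x. x \<in> M \<Longrightarrow> \<exists>G \<in> (\<lambda>xb. ball xb (rr xb)) ` M. ball x e \<subseteq> G"
  proof (rule Heine_Borel_lemma[OF M_props(2), of "(\<lambda>xb. ball xb (rr xb)) ` M"])
    show "M \<subseteq> \<Union> ((\<lambda>xb. ball xb (rr xb)) ` M)" using rr(1) by force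
  qed auto
  have "\<bar>\<phi> v x - \<phi> v' x\<bar> \<le> (B + \<epsilon>' * Rsum) * t"
    if xm: "xm \<in> M" and x: "dist x xm < e" and v: "dist v ubar < e" and v': "dist v' ubar < e"
      and t: "0 \<le> t" and tb: "\<forall>k\<in>{1..s}. N k (P k (v - v')) \<le> t" for xm x v v' t
  proof -
    obtain xb where xb: "xb \<in> M" "ball xm e \<subseteq> ball xb (rr xb)" using e(2)[OF xm] by blast
    then have "dist xm xb + e \<le> rr xb" using e(1) ball_subset_ball_iff[of xm e xb "rr xb"] by linarith
    moreover have "dist x xb \<le> dist x xm + dist xm xb" by (rule dist_triangle)
    moreover have "dist xm xb \<ge> 0" by simp
    ultimately have er: "e \<le> rr xb" "dist x xb < rr xb" using x by linarith+
    have each: "\<bar>Max ((\<lambda>i. Fp i k (v,x)) ` {1..r k}) - Max ((\<lambda>i. Fp i k (v',x)) ` {1..r k})\<bar>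
        \<le> (LL k xb + \<epsilon>' * r k) * t" if k: "k \<in> {1..s}" for k
    proof -
      have cI: "card (I k xb) \<le> r k"
        using card_mono[OF _ I_props(1)[OF k]] by simp
      have "\<bar>Max ((\<lambda>i. Fp i k (v,x)) ` {1..r k}) - Max ((\<lambda>i. Fp i k (v',x)) ` {1..r k})\<bar>
        \<le> (LL k xb + \<epsilon>' * card (I k xb)) * N k (P k (v - v'))"
        using rr(2)[OF xb(1) er(2) _ _ k] v v' er(1) by simp
      also have "\<dots> \<le> (LL k xb + \<epsilon>' * r k) * t"
      proof (rule mult_mono)
        show "LL k xb + \<epsilon>' * real (card (I k xb)) \<le> LL k xb + \<epsilon>' * real (r k)"
          using cI ep by simp
        show "N k (P k (v - v')) \<le> t" using tb k by blast
        show "0 \<le> LL k xb + \<epsilon>' * real (r k)" using LL_nonneg[OF k] ep by simp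
        show "0 \<le> N k (P k (v - v'))" using Nk_nonneg[OF k] .
      qed
      finally show ?thesis .
    qed
    have "\<phi> v x - \<phi> v' x = (\<Sum>k\<in>{1..s}. Max ((\<lambda>i. Fp i k (v,x)) ` {1..r k}) - Max ((\<lambda>i. Fp i k (v',x)) ` {1..r k}))"
      unfolding phi_eq by (simp add: sum_subtractf)
    then have "\<bar>\<phi> v x - \<phi> v' x\<bar> \<le> (\<Sum>k\<in>{1..s}. \<bar>Max ((\<lambda>i. Fp i k (v,x)) ` {1..r k}) - Max ((\<lambda>i. Fp i k (v',x)) ` {1..r k})\<bar>)"
      by (simp add: sum_abs)
    also have "\<dots> \<le> (\<Sum>k\<in>{1..s}. (LL k xb + \<epsilon>' * r k) * t)" using each by (intro sum_mono) auto
    also have "\<dots> = ((\<Sum>k\<in>{1..s}. LL k xb) + \<epsilon>' * Rsum) * t"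
      unfolding Rsum_def by (simp add: sum_distrib_right[symmetric] sum.distrib sum_distrib_left)
    also have "\<dots> \<le> (B + \<epsilon>' * Rsum) * t" using B_ge[OF xb(1)] t by (intro mult_right_mono) auto
    finally show ?thesis .
  qed
  then show ?thesis using e(1) by blast
qed

end



context setting begin

lemma U_iff: "v \<in> U \<delta> \<longleftrightarrow> (\<forall>k\<in>{1..s}. N k (P k (v - ubar)) \<le> \<bar>\<delta>\<bar>)"
  using U_def S_ne by (simp add: Max_le_iff)

lemma Nk_zero: "k \<in> {1..s} \<Longrightarrow> N k 0 = 0"
  using N_zero[OF N_k bs_zero bs_add bs_scale] by blast

lemma Nk_scale: "k \<in> {1..s} \<Longrightarrow> N k (P k (a *\<^sub>R w)) = \<bar>a\<bar> * N k (P k w)"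
  using N_scale[OF N_k bs_zero bs_add bs_scale bp_in] by (simp add: bp_scale)

lemma ubar_U: "ubar \<in> U \<delta>"
  unfolding U_iff using Nk_zero by (simp add: bp_zero)

lemma U_norm: "v \<in> U \<delta> \<Longrightarrow> norm (v - ubar) \<le> real s * \<bar>\<delta>\<bar> / cc"
proof -
  assume v: "v \<in> U \<delta>"
  have "v - ubar = (\<Sum>k\<in>{1..s}. P k (v - ubar))" using sum_bp[of "{1..s}" blk] blk_range by simp
  then have "norm (v - ubar) \<le> (\<Sum>k\<in>{1..s}. norm (P k (v - ubar)))" by (metis norm_sum)
  also have "\<dots> \<le> (\<Sum>k\<in>{1..s}. \<bar>\<delta>\<bar> / cc)"
  proof (intro sum_mono)
    fix k assume k: "k \<in> {1..s}"
    have "cc * norm (P k (v - ubar)) \<le> \<bar>\<delta>\<bar>"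
      using cc_props(2)[OF k bp_in] v U_iff k by (meson order_trans)
    then show "norm (P k (v - ubar)) \<le> \<bar>\<delta>\<bar> / cc" using cc_props(1) by (simp add: field_simps)
  qed
  also have "\<dots> = real s * \<bar>\<delta>\<bar> / cc" by simp
  finally show ?thesis .
qed

lemma phi_bdd: "\<exists>Bd. \<forall>v x. norm (v - ubar) \<le> R \<longrightarrow> x \<in> X \<longrightarrow> \<bar>\<phi> v x\<bar> \<le> Bd"
proof -
  have "compact ((\<lambda>p. \<phi> (fst p) (snd p)) ` (cball ubar R \<times> X))"
    using X_cpt by (intro compact_continuous_image continuous_on_subset[OF phi_cont] compact_Times) auto
  then obtain b where b: "\<And>y. y \<in> (\<lambda>p. \<phi> (fst p) (snd p)) ` (cball ubar R \<times> X) \<Longrightarrow> norm y \<le> b"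
    using compact_imp_bounded bounded_iff by metis
  have "\<bar>\<phi> v x\<bar> \<le> b" if "norm (v - ubar) \<le> R" "x \<in> X" for v x
    using b[of "\<phi> v x"] that by (force simp: dist_norm norm_minus_commute)
  then show ?thesis by blast
qed

definition "hh x \<delta> = (SUP v\<in>U \<delta>. \<phi> v x)"

lemma hh_bdd: "x \<in> X \<Longrightarrow> bdd_above ((\<lambda>v. \<phi> v x) ` U \<delta>)"
proof -
  assume x: "x \<in> X"
  obtain Bd where "\<forall>v x. norm (v - ubar) \<le> real s * \<bar>\<delta>\<bar> / cc \<longrightarrow> x \<in> X \<longrightarrow> \<bar>\<phi> v x\<bar> \<le> Bd"
    using phi_bdd by blast
  then show ?thesis using U_norm x by (intro bdd_aboveI2[of _ _ Bd]) force
qed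

lemma hh_upper: "x \<in> X \<Longrightarrow> v \<in> U \<delta> \<Longrightarrow> \<phi> v x \<le> hh x \<delta>"
  unfolding hh_def using hh_bdd by (intro cSUP_upper) auto

lemma hh_ge: "x \<in> X \<Longrightarrow> \<phi> ubar x \<le> hh x \<delta>"
  using hh_upper ubar_U by blast

definition "xm0 = (SOME x. x \<in> M)"
definition "m0 = \<phi> ubar xm0"

lemma xm0: "xm0 \<in> M" unfolding xm0_def using M_props(1) by (simp add: some_in_eq)

lemma m0_le: "x \<in> X \<Longrightarrow> m0 \<le> \<phi> ubar x"
  using xm0 M_def unfolding m0_def by blast

lemma q_eq: "q \<delta> = (INF x\<in>X. hh x \<delta>)" using q_def hh_def by simp

lemma hh_bdd_below: "bdd_below ((\<lambda>x. hh x \<delta>) ` X)"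
  using hh_ge m0_le by (intro bdd_belowI2[where m=m0]) (meson order_trans)

lemma q_le: "x \<in> X \<Longrightarrow> q \<delta> \<le> hh x \<delta>"
  unfolding q_eq using hh_bdd_below by (intro cINF_lower) auto

lemma shrink:
  assumes v: "v \<in> U \<delta>"
  shows "\<exists>v'\<in>U \<delta>'. \<forall>k\<in>{1..s}. N k (P k (v - v')) \<le> \<bar>\<bar>\<delta>\<bar> - \<bar>\<delta>'\<bar>\<bar>"
proof (cases "\<bar>\<delta>\<bar> \<le> \<bar>\<delta>'\<bar>")
  case True
  then have "v \<in> U \<delta>'" using v U_iff by force
  then show ?thesis using Nk_zero by (intro bexI[of _ v]) (auto simp: bp_zero)
next
  case False
  define a where "a = \<bar>\<delta>'\<bar> / \<bar>\<delta>\<bar>"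
  have a: "0 \<le> a" "a \<le> 1" "a * \<bar>\<delta>\<bar> = \<bar>\<delta>'\<bar>" using False unfolding a_def by auto
  define v' where "v' = ubar + a *\<^sub>R (v - ubar)"
  have e1: "v' - ubar = a *\<^sub>R (v - ubar)" unfolding v'_def by simp
  have e2: "v - v' = (1 - a) *\<^sub>R (v - ubar)" unfolding v'_def by (simp add: algebra_simps)
  have "v' \<in> U \<delta>'" unfolding U_iff
  proof
    fix k assume k: "k \<in> {1..s}"
    have "N k (P k (v' - ubar)) = a * N k (P k (v - ubar))" unfolding e1 using Nk_scale[OF k] a by simp
    also have "\<dots> \<le> a * \<bar>\<delta>\<bar>" using v U_iff k a(1) by (simp add: mult_left_mono)
    finally show "N k (P k (v' - ubar)) \<le> \<bar>\<delta>'\<bar>" using a by simp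
  qed
  moreover have "N k (P k (v - v')) \<le> \<bar>\<bar>\<delta>\<bar> - \<bar>\<delta>'\<bar>\<bar>" if k: "k \<in> {1..s}" for k
  proof -
    have "N k (P k (v - v')) = (1 - a) * N k (P k (v - ubar))" unfolding e2 using Nk_scale[OF k] a by simp
    also have "\<dots> \<le> (1 - a) * \<bar>\<delta>\<bar>" using v U_iff k a(2) by (simp add: mult_left_mono)
    also have "\<dots> = \<bar>\<bar>\<delta>\<bar> - \<bar>\<delta>'\<bar>\<bar>" using a False by (simp add: algebra_simps)
    finally show ?thesis .
  qed
  ultimately show ?thesis by blast
qed

end



context setting begin

lemma q_lip:
  fixes \<epsilon>' :: real
  assumes ep: "\<epsilon>' > 0"
  shows "\<exists>\<rho>>0. \<forall>\<delta> \<delta>'. \<bar>\<delta>\<bar> \<le> \<rho> \<longrightarrow> \<bar>\<delta>'\<bar> \<le> \<rho> \<longrightarrow> q \<delta> \<le> q \<delta>' + (B + \<epsilon>' * Rsum) * \<bar>\<delta> - \<delta>'\<bar>"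
proof -
  define K where "K = B + \<epsilon>' * Rsum"
  have K0: "K \<ge> 0" unfolding K_def using B_nonneg Rsum_nonneg ep by simp
  obtain e where e: "e > 0" and lip: "\<And>xm x v v' t. xm \<in> M \<Longrightarrow> dist x xm < e \<Longrightarrow> dist v ubar < e \<Longrightarrow>
      dist v' ubar < e \<Longrightarrow> 0 \<le> t \<Longrightarrow> (\<forall>k\<in>{1..s}. N k (P k (v - v')) \<le> t) \<Longrightarrow>
      \<bar>\<phi> v x - \<phi> v' x\<bar> \<le> K * t"
    using phi_lip_near_M[OF ep] unfolding K_def by blast
  let ?G = "\<Union>xm\<in>M. ball xm e"
  obtain \<eta> where \<eta>: "\<eta> > 0" and \<eta>P: "\<And>x. x \<in> X \<Longrightarrow> \<phi> ubar x < m0 + \<eta> \<Longrightarrow> \<exists>xm\<in>M. dist x xm < e"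
  proof (cases "X - ?G = {}")
    case True
    show ?thesis
    proof (rule that[of 1])
      fix x assume "x \<in> X"
      then have "x \<in> ?G" using True by blast
      then show "\<exists>xm\<in>M. dist x xm < e" by (auto simp: dist_commute)
    qed simp
  next
    case False
    have cZ: "compact (X - ?G)" by (intro compact_diff X_cpt open_UN ballI open_ball)
    obtain z where z: "z \<in> X - ?G" "\<And>y. y \<in> X - ?G \<Longrightarrow> \<phi> ubar z \<le> \<phi> ubar y"
      using continuous_attains_inf[OF cZ False phi_cont_x[of "X - ?G" ubar]] by blast
    have "z \<notin> M"
    proof
      assume "z \<in> M" then have "z \<in> ?G" using e by (intro UN_I[of z]) auto
      then show False using z(1) by blast
    qed
    moreover have "z \<in> X" using z(1) by blast
    ultimately have "\<not> (\<forall>y\<in>X. \<phi> ubar z \<le> \<phi> ubar y)" using M_def by blast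
    then obtain y where y: "y \<in> X" "\<phi> ubar z > \<phi> ubar y" by (auto simp: not_le)
    have zm: "\<phi> ubar z > m0" using m0_le[OF y(1)] y(2) by simp
    show ?thesis
    proof (rule that[of "\<phi> ubar z - m0"])
      show "\<phi> ubar z - m0 > 0" using zm by simp
      fix x assume x: "x \<in> X" "\<phi> ubar x < m0 + (\<phi> ubar z - m0)"
      then have "x \<notin> X - ?G" using z(2)[of x] by force
      then show "\<exists>xm\<in>M. dist x xm < e" using x by (auto simp: dist_commute)
    qed
  qed
  define \<rho> where "\<rho> = min (cc * e / (2 * real s)) (\<eta> / (4 * (K + 1)))"
  have sp: "real s > 0" using s_pos by simp
  have \<rho>0: "\<rho> > 0" unfolding \<rho>_def using cc_props(1) e sp \<eta> K0 by auto
  have Kr: "K * \<rho> \<le> \<eta> / 4"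
  proof -
    have "K * \<rho> \<le> K * (\<eta> / (4 * (K + 1)))" unfolding \<rho>_def using K0 by (intro mult_left_mono) auto
    also have "\<dots> \<le> (K + 1) * (\<eta> / (4 * (K + 1)))" using \<eta> K0 by (intro mult_right_mono) auto
    also have "\<dots> = \<eta> / 4" using K0 by (simp add: field_simps)
    finally show ?thesis .
  qed
  have Uin: "dist v ubar < e" if "\<bar>\<delta>\<bar> \<le> \<rho>" "v \<in> U \<delta>" for \<delta> v
  proof -
    have "real s * \<bar>\<delta>\<bar> \<le> real s * (cc * e / (2 * real s))"
      using that(1) sp unfolding \<rho>_def by (intro mult_left_mono) auto
    also have "\<dots> = cc * e / 2" using sp by simp
    finally have "real s * \<bar>\<delta>\<bar> / cc \<le> e / 2" using cc_props(1) by (simp add: field_simps)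
    moreover have "norm (v - ubar) \<le> real s * \<bar>\<delta>\<bar> / cc" using U_norm[OF that(2)] .
    ultimately have "norm (v - ubar) < e" using e by linarith
    then show ?thesis by (simp add: dist_norm)
  qed
  have qup: "q \<delta>' \<le> m0 + K * \<rho>" if d': "\<bar>\<delta>'\<bar> \<le> \<rho>" for \<delta>'
  proof -
    have "hh xm0 \<delta>' \<le> \<phi> ubar xm0 + K * \<bar>\<delta>'\<bar>"
      unfolding hh_def
    proof (rule cSUP_least)
      show "U \<delta>' \<noteq> {}" using ubar_U by blast
      fix v assume v: "v \<in> U \<delta>'"
      have "\<bar>\<phi> v xm0 - \<phi> ubar xm0\<bar> \<le> K * \<bar>\<delta>'\<bar>"
        using lip[OF xm0 _ Uin[OF d' v], of xm0 ubar "\<bar>\<delta>'\<bar>"] e v U_iff by simp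
      then show "\<phi> v xm0 \<le> \<phi> ubar xm0 + K * \<bar>\<delta>'\<bar>" by linarith
    qed
    moreover have "q \<delta>' \<le> hh xm0 \<delta>'" using q_le xm0 M_props(3) by blast
    moreover have "K * \<bar>\<delta>'\<bar> \<le> K * \<rho>" using d' K0 by (intro mult_left_mono) auto
    ultimately show ?thesis unfolding m0_def by linarith
  qed
  have main: "q \<delta> \<le> q \<delta>' + K * \<bar>\<delta> - \<delta>'\<bar>" if d: "\<bar>\<delta>\<bar> \<le> \<rho>" and d': "\<bar>\<delta>'\<bar> \<le> \<rho>" for \<delta> \<delta>'
  proof (rule field_le_epsilon)
    fix \<gamma> :: real assume \<gamma>: "\<gamma> > 0"
    define \<gamma>' where "\<gamma>' = min \<gamma> (\<eta> / 4)"
    have \<gamma>': "\<gamma>' > 0" "\<gamma>' \<le> \<gamma>" "\<gamma>' \<le> \<eta> / 4" unfolding \<gamma>'_def using \<gamma> \<eta> by auto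
    have "(INF x\<in>X. hh x \<delta>') < q \<delta>' + \<gamma>'" using q_eq \<gamma>' by simp
    then obtain x' where x': "x' \<in> X" "hh x' \<delta>' < q \<delta>' + \<gamma>'"
      using cINF_less_iff[OF X_ne hh_bdd_below] by blast
    have "\<phi> ubar x' < m0 + \<eta>"
      using hh_ge[OF x'(1), of \<delta>'] x'(2) qup[OF d'] Kr \<gamma>' \<eta> by linarith
    then obtain xm where xm: "xm \<in> M" "dist x' xm < e" using \<eta>P[OF x'(1)] by blast
    define t where "t = \<bar>\<bar>\<delta>\<bar> - \<bar>\<delta>'\<bar>\<bar>"
    have t: "t \<ge> 0" "t \<le> \<bar>\<delta> - \<delta>'\<bar>" unfolding t_def by auto
    have "hh x' \<delta> \<le> hh x' \<delta>' + K * t"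
      unfolding hh_def[of x' \<delta>]
    proof (rule cSUP_least)
      show "U \<delta> \<noteq> {}" using ubar_U by blast
      fix v assume v: "v \<in> U \<delta>"
      obtain v' where v': "v' \<in> U \<delta>'" "\<forall>k\<in>{1..s}. N k (P k (v - v')) \<le> t"
        using shrink[OF v, of \<delta>'] unfolding t_def by blast
      have "\<bar>\<phi> v x' - \<phi> v' x'\<bar> \<le> K * t"
        using lip[OF xm Uin[OF d v] Uin[OF d' v'(1)] t(1) v'(2)] .
      moreover have "\<phi> v' x' \<le> hh x' \<delta>'" using hh_upper[OF x'(1) v'(1)] .
      ultimately show "\<phi> v x' \<le> hh x' \<delta>' + K * t" by linarith
    qed
    moreover have "q \<delta> \<le> hh x' \<delta>" using q_le[OF x'(1)] .
    moreover have "K * t \<le> K * \<bar>\<delta> - \<delta>'\<bar>" using t K0 by (intro mult_left_mono) auto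
    ultimately show "q \<delta> \<le> q \<delta>' + K * \<bar>\<delta> - \<delta>'\<bar> + \<gamma>" using x'(2) \<gamma>' by linarith
  qed
  then show ?thesis using \<rho>0 unfolding K_def by blast
qed

end



lemma grad_sup:
  fixes G :: "real^'m::finite \<Rightarrow> real"
  assumes der: "(G has_derivative L) (at u)" and inv: "\<And>v. G (blockproj blk k v) = G v"
  shows "(SUP w\<in>{w\<in>blockspace blk k. norm w \<le> 1}. \<bar>frechet_derivative G (at u) w\<bar>) = norm (grad G u)"
proof -
  have fd: "frechet_derivative G (at u) = L" using frechet_derivative_at[OF der] by simp
  have lin: "linear L" using has_derivative_bounded_linear[OF der] bounded_linear.linear by blast
  define g where "g = grad G u"
  have gj: "g $ j = L (axis j 1)" for j unfolding g_def grad_def fd by simp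
  have Lw: "L w = g \<bullet> w" for w
  proof -
    have "w = (\<Sum>j\<in>UNIV. w $ j *\<^sub>R axis j 1)"
      using basis_expansion[of w] by (simp add: scalar_mult_eq_scaleR)
    then have "L w = (\<Sum>j\<in>UNIV. L (w $ j *\<^sub>R axis j 1))"
      using linear_sum[OF lin] by metis
    also have "\<dots> = (\<Sum>j\<in>UNIV. w $ j * L (axis j 1))"
      using linear_scale[OF lin] by simp
    also have "\<dots> = g \<bullet> w" by (simp add: inner_vec_def gj mult.commute)
    finally show ?thesis .
  qed
  have gBS: "g \<in> blockspace blk k"
    unfolding blockspace_def
  proof (intro CollectI allI impI)
    fix j assume j: "blk j \<noteq> k"
    define a where "a = (axis j 1 :: real^'m)"
    have Pa: "blockproj blk k a = 0" using j unfolding a_def by (auto simp: blockproj_def vec_eq_iff axis_def)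
    have const: "(\<lambda>t::real. G (u + t *\<^sub>R a)) = (\<lambda>t. G u)"
    proof
      fix t :: real
      have "G (u + t *\<^sub>R a) = G (blockproj blk k (u + t *\<^sub>R a))" using inv by simp
      also have "\<dots> = G (blockproj blk k u)" by (simp add: bp_add bp_scale Pa)
      also have "\<dots> = G u" using inv by simp
      finally show "G (u + t *\<^sub>R a) = G u" .
    qed
    have l: "((\<lambda>t::real. u + t *\<^sub>R a) has_derivative (\<lambda>t. t *\<^sub>R a)) (at 0)"
      by (auto intro!: derivative_eq_intros)
    have der0: "(G has_derivative L) (at (u + 0 *\<^sub>R a))" using der by simp
    have "((\<lambda>t. G (u + t *\<^sub>R a)) has_derivative (\<lambda>t. L (t *\<^sub>R a))) (at 0)"
      using has_derivative_compose[OF l der0] by simp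
    then have "((\<lambda>t::real. G u) has_derivative (\<lambda>t. L (t *\<^sub>R a))) (at 0)" using const by simp
    moreover have "((\<lambda>t::real. G u) has_derivative (\<lambda>t. 0)) (at 0)" by (rule has_derivative_const)
    ultimately have "(\<lambda>t. L (t *\<^sub>R a)) = (\<lambda>t. 0)" by (rule has_derivative_unique)
    then have "L a = 0" by (metis scaleR_one)
    then show "g $ j = 0" using gj unfolding a_def by simp
  qed
  let ?W = "{w\<in>blockspace blk k. norm w \<le> 1}"
  have ub: "\<bar>g \<bullet> w\<bar> \<le> norm g" if "w \<in> ?W" for w
  proof -
    have "\<bar>g \<bullet> w\<bar> \<le> norm g * norm w" by (rule Cauchy_Schwarz_ineq2)
    also have "\<dots> \<le> norm g * 1" using that by (intro mult_left_mono) auto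
    finally show ?thesis by simp
  qed
  define w0 where "w0 = (1 / norm g) *\<^sub>R g"
  have w0W: "w0 \<in> ?W" unfolding w0_def using gBS bs_scale by (auto simp: divide_simps)
  have w0v: "\<bar>g \<bullet> w0\<bar> = norm g"
    unfolding w0_def by (cases "g = 0") (auto simp: power2_norm_eq_inner[symmetric] power2_eq_square)
  have "(SUP w\<in>?W. \<bar>g \<bullet> w\<bar>) = norm g"
  proof (rule antisym)
    show "(SUP w\<in>?W. \<bar>g \<bullet> w\<bar>) \<le> norm g" using w0W ub by (intro cSUP_least) auto
    show "norm g \<le> (SUP w\<in>?W. \<bar>g \<bullet> w\<bar>)"
    proof -
      have bdd: "bdd_above ((\<lambda>w. \<bar>g \<bullet> w\<bar>) ` ?W)"
        by (rule bdd_aboveI2[where M="norm g"]) (rule ub)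
      show ?thesis using cSUP_upper2[OF bdd w0W] w0v by simp
    qed
  qed
  then show ?thesis unfolding fd Lw g_def .
qed

context setting begin

lemma part_a: "loc_lipschitz_at q 0"
proof -
  obtain \<rho> where \<rho>: "\<rho> > 0" "\<And>\<delta> \<delta>'. \<bar>\<delta>\<bar> \<le> \<rho> \<Longrightarrow> \<bar>\<delta>'\<bar> \<le> \<rho> \<Longrightarrow> q \<delta> \<le> q \<delta>' + (B + 1 * Rsum) * \<bar>\<delta> - \<delta>'\<bar>"
    using q_lip[of 1] by auto
  have K0: "B + 1 * Rsum \<ge> 0" using B_nonneg Rsum_nonneg by simp
  have "\<bar>q z - q z'\<bar> \<le> (B + 1 * Rsum) * dist z z'" if "dist z 0 \<le> \<rho>" "dist z' 0 \<le> \<rho>" for z z'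
  proof -
    have a: "\<bar>z\<bar> \<le> \<rho>" "\<bar>z'\<bar> \<le> \<rho>" using that by (auto simp: dist_real_def)
    have c: "\<bar>z' - z\<bar> = \<bar>z - z'\<bar>" by (rule abs_minus_commute)
    have "q z - q z' \<le> (B + 1 * Rsum) * \<bar>z - z'\<bar>" "q z' - q z \<le> (B + 1 * Rsum) * \<bar>z - z'\<bar>"
      using \<rho>(2)[OF a] \<rho>(2)[OF a(2,1), unfolded c] by linarith+
    then show ?thesis unfolding dist_real_def abs_le_iff by simp
  qed
  then have "\<forall>z z'. dist z 0 \<le> \<rho> \<longrightarrow> dist z' 0 \<le> \<rho> \<longrightarrow> \<bar>q z - q z'\<bar> \<le> (B + 1 * Rsum) * dist z z'"
    by blast
  then show ?thesis unfolding loc_lipschitz_at_def using K0 \<rho>(1) by blast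
qed

lemma part_b: "lip_mod q 0 \<le> ereal B"
proof (rule ereal_le_epsilon2)
  fix e :: real assume e: "e > 0"
  define \<epsilon>' where "\<epsilon>' = e / (Rsum + 1)"
  have ep: "\<epsilon>' > 0" unfolding \<epsilon>'_def using e Rsum_nonneg by simp
  have epR: "\<epsilon>' * Rsum \<le> e"
  proof -
    have "\<epsilon>' * Rsum \<le> \<epsilon>' * (Rsum + 1)" using ep by simp
    also have "\<dots> = e" unfolding \<epsilon>'_def using Rsum_nonneg by simp
    finally show ?thesis .
  qed
  obtain \<rho> where \<rho>: "\<rho> > 0" "\<And>\<delta> \<delta>'. \<bar>\<delta>\<bar> \<le> \<rho> \<Longrightarrow> \<bar>\<delta>'\<bar> \<le> \<rho> \<Longrightarrow> q \<delta> \<le> q \<delta>' + (B + \<epsilon>' * Rsum) * \<bar>\<delta> - \<delta>'\<bar>"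
    using q_lip[OF ep] by auto
  have ev: "eventually (\<lambda>p. ereal (\<bar>q (fst p) - q (snd p)\<bar> / dist (fst p) (snd p)) \<le> ereal B + ereal e)
      (at (0::real, 0::real) within {p. fst p \<noteq> snd p})"
    unfolding eventually_at
  proof (intro exI[of _ \<rho>] conjI ballI impI)
    show "\<rho> > 0" by fact
    fix p :: "real \<times> real" assume p: "p \<in> {p. fst p \<noteq> snd p}" and pd: "p \<noteq> (0, 0) \<and> dist p (0, 0) < \<rho>"
    obtain a b where ab: "p = (a, b)" by force
    have a: "\<bar>a\<bar> \<le> \<rho>" using dist_fst_le[of p "(0,0)"] pd ab by (simp add: dist_real_def)
    have b: "\<bar>b\<bar> \<le> \<rho>" using dist_snd_le[of p "(0,0)"] pd ab by (simp add: dist_real_def)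
    have "\<bar>q a - q b\<bar> \<le> (B + \<epsilon>' * Rsum) * \<bar>a - b\<bar>"
    proof -
      have c: "\<bar>b - a\<bar> = \<bar>a - b\<bar>" by (rule abs_minus_commute)
      have "q a - q b \<le> (B + \<epsilon>' * Rsum) * \<bar>a - b\<bar>" "q b - q a \<le> (B + \<epsilon>' * Rsum) * \<bar>a - b\<bar>"
        using \<rho>(2)[OF a b] \<rho>(2)[OF b a, unfolded c] by linarith+
      then show ?thesis unfolding abs_le_iff by simp
    qed
    moreover have "\<bar>a - b\<bar> > 0" using p ab by simp
    ultimately have "\<bar>q a - q b\<bar> / \<bar>a - b\<bar> \<le> B + \<epsilon>' * Rsum" by (simp add: divide_le_eq)
    then have "\<bar>q a - q b\<bar> / dist a b \<le> B + e" using epR by (simp add: dist_real_def)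
    then show "ereal (\<bar>q (fst p) - q (snd p)\<bar> / dist (fst p) (snd p)) \<le> ereal B + ereal e"
      using ab by simp
  qed
  show "lip_mod q 0 \<le> ereal B + ereal e"
    unfolding lip_mod_def using Limsup_bounded[OF ev] by simp
qed

lemma part_c:
  assumes "\<forall>k\<in>{1..s}. \<forall>w\<in>blockspace blk k. N k w = norm w"
  shows "B = (SUP xb\<in>M. \<Sum>k\<in>{1..s}. \<Sum>i\<in>I k xb. norm (grad (\<lambda>v. f i k (blockproj blk k v) xb) ubar))"
  unfolding B_def
proof (intro SUP_cong refl sum.cong)
  fix xb k i assume k: "k \<in> {1..s}" and i: "i \<in> I k xb"
  then have i': "i \<in> {1..r k}" using I_props by blast
  have set_eq: "{w\<in>BS k. N k w \<le> 1} = {w\<in>BS k. norm w \<le> 1}" using assms k by auto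
  have der: "((\<lambda>v. f i k (P k v) xb) has_derivative (\<lambda>w. D i k (ubar, xb) (w, 0))) (at ubar)"
    using fd_has[OF D_props(1)[OF k i'], of xb ubar] by (simp add: Fp_app)
  show "(SUP w\<in>{w\<in>BS k. N k w \<le> 1}. \<bar>frechet_derivative (\<lambda>v. f i k (P k v) xb) (at ubar) w\<bar>)
      = norm (grad (\<lambda>v. f i k (P k v) xb) ubar)"
    unfolding set_eq by (rule grad_sup[OF der]) (simp add: bp_idem)
qed

end

theorem corollary1:
  fixes f0 :: "real^'n \<Rightarrow> real"
    and X :: "(real^'n) set"
    and s :: nat and r :: "nat \<Rightarrow> nat"
    and blk :: "'m::finite \<Rightarrow> nat"
    and f :: "nat \<Rightarrow> nat \<Rightarrow> real^'m \<Rightarrow> real^'n \<Rightarrow> real"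
    and ubar :: "real^'m"
    and N :: "nat \<Rightarrow> real^'m \<Rightarrow> real"
    and U :: "real \<Rightarrow> (real^'m) set"
    and \<phi> :: "real^'m \<Rightarrow> real^'n \<Rightarrow> real"
    and q :: "real \<Rightarrow> real"
    and M :: "(real^'n) set"
    and I :: "nat \<Rightarrow> real^'n \<Rightarrow> nat set"
    and B :: real
  assumes f0_lip: "loc_lipschitz f0"
    and X_ne: "X \<noteq> {}" and X_cpt: "compact X"
    and blk_range: "\<forall>j. blk j \<in> {1..s}"
    and r_pos: "\<forall>k\<in>{1..s}. r k \<ge> 1"
    and f_C1: "\<forall>k\<in>{1..s}. \<forall>i\<in>{1..r k}.
                 C1 (\<lambda>p::(real^'m) \<times> (real^'n). f i k (blockproj blk k (fst p)) (snd p))"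
    and N_norm: "\<forall>k\<in>{1..s}. is_norm_on (blockspace blk k) (N k)"
    and U_def: "\<forall>\<delta>. U \<delta> = {v. Max ((\<lambda>k. N k (blockproj blk k (v - ubar))) ` {1..s}) \<le> \<bar>\<delta>\<bar>}"
    and \<phi>_def: "\<forall>v x. \<phi> v x = f0 x + (\<Sum>k\<in>{1..s}. Max ((\<lambda>i. f i k (blockproj blk k v) x) ` {1..r k}))"
    and q_def: "\<forall>\<delta>. q \<delta> = (INF x\<in>X. SUP v\<in>U \<delta>. \<phi> v x)"
    and M_def: "M = {x\<in>X. \<forall>y\<in>X. \<phi> ubar x \<le> \<phi> ubar y}"
    and I_def: "\<forall>k x. I k x = {i\<in>{1..r k}. f i k (blockproj blk k ubar) x
                          = Max ((\<lambda>j. f j k (blockproj blk k ubar) x) ` {1..r k})}"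
    and B_def: "B = (SUP xb\<in>M. \<Sum>k\<in>{1..s}. \<Sum>i\<in>I k xb.
                   (SUP w\<in>{w\<in>blockspace blk k. N k w \<le> 1}.
                      \<bar>frechet_derivative (\<lambda>v. f i k (blockproj blk k v) xb) (at ubar) w\<bar>))"
  shows "loc_lipschitz_at q 0 \<and> lip_mod q 0 \<le> ereal B \<and>
         ((\<forall>k\<in>{1..s}. \<forall>w\<in>blockspace blk k. N k w = norm w) \<longrightarrow>
            B = (SUP xb\<in>M. \<Sum>k\<in>{1..s}. \<Sum>i\<in>I k xb.
                   norm (grad (\<lambda>v. f i k (blockproj blk k v) xb) ubar)))"
  proof -
  interpret S: setting f0 X s r blk f ubar N U \<phi> q M I B
    by unfold_locales (fact assms)+
  show ?thesis using S.part_a S.part_b S.part_c by blast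
qed

end
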